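(* Let $C = c_0c_1\dots c_{m-1}c_0$ and $D=(0)(1)\dots(n-1)(0)$ be reflexive digraph cycles with $D$ non-contractible. For any homomorphism $\phi \in \mathrm{Hom}(C,D)$ and any cutback $P = c_a \dots c_b$ of $C$ (with respect to $\phi$), there is a path of up edges in $\mathrm{Hom}(C,D)$ from $\phi$ to the homomorphism $\phi'$ obtained from $\phi$ by setting $\phi'(c_i) = \phi(c_a)$ for all vertices $c_i$ of $P$ (and $\phi'=\phi$ elsewhere).
   Context: A digraph is a binary relation $\to$ on a finite vertex set; a loop is an arc $uu$; reflexive means every vertex has a loop. A digraph cycle $C=c_0c_1\dots c_{m-1}c_0$ (indices mod $m$, $m\ge3$) has underlying graph the cycle with edges $c_ic_{i+1}$. $D=(0)(1)\dots(n-1)(0)$ has vertex set the integers mod $n$. $D$ is non-contractible if it has length at least $4$ or is a directed $3$-cycle. A homomorphism $\phi:C\to D$ satisfies $u\to v \Rightarrow \phi(u)\to\phi(v)$. $\mathrm{Hom}(C,D)$ is the digraph on homomorphisms with $\phi\to\phi'$ iff $\phi(u)\to\phi'(v)$ for all arcs $u\to v$ of $C$; $\phi,\phi'$ are adjacent if $\phi\to\phi'$ or $\phi'\to\phi$. For adjacent $\phi,\phi'$ (with $C$ reflexive) each vertex $c$ has $\phi'(c)\in\{\phi(c),\phi(c)\pm1\}$; $c$ moves up if $\phi'(c)=\phi(c)+1$ and moves down if $\phi'(c)=\phi(c)-1$. The pair $(\phi,\phi')$ is an up edge if they are adjacent and every vertex that moves, moves up. A path of up edges from $\phi$ to $\phi'$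 is a sequence $\phi=\phi_0,\dots,\phi_k=\phi'$ with each $(\phi_{j},\phi_{j+1})$ an up edge. Under $\phi$, edge $c_ic_{i+1}$ is increasing, stationary or decreasing as $\phi(c_{i+1})-\phi(c_i)$ is $1,0,-1$; the increase of a subpath is its number of increasing edges minus its number of decreasing edges. A subpath $P=c_a\dots c_b$ is a cutback (for $\phi$) if its increase is $0$ and the increase of $c_a\dots c_i$ is negative for all $i\in\{a+1,\dots,b-1\}$. *)

theory Defs
  imports Main
begin

definition refl_dicycle :: "nat \<Rightarrow> (nat \<Rightarrow> nat \<Rightarrow> bool) \<Rightarrow> bool" where
  "refl_dicycle m R \<longleftrightarrow>
     m \<ge> 3 \<and>
     (\<forall>u v. R u v \<longrightarrow> u < m \<and> v < m) \<and>
     (\<forall>u<m. R u u) \<and>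
     (\<forall>u<m. \<forall>v<m. u \<noteq> v \<longrightarrow> R u v \<longrightarrow> v = Suc u mod m \<or> u = Suc v mod m) \<and>
     (\<forall>i<m. R i (Suc i mod m) \<or> R (Suc i mod m) i)"

definition non_contractible :: "nat \<Rightarrow> (nat \<Rightarrow> nat \<Rightarrow> bool) \<Rightarrow> bool" where
  "non_contractible n R \<longleftrightarrow>
     n \<ge> 4 \<or>
     (n = 3 \<and> ((\<forall>i<3. R i (Suc i mod 3) \<and> \<not> R (Suc i mod 3) i) \<or>
                (\<forall>i<3. R (Suc i mod 3) i \<and> \<not> R i (Suc i mod 3))))"

definition is_hom :: "nat \<Rightarrow> (nat \<Rightarrow> nat \<Rightarrow> bool) \<Rightarrow> nat \<Rightarrow> (nat \<Rightarrow> nat \<Rightarrow> bool) \<Rightarrow> (nat \<Rightarrow> nat) \<Rightarrow> bool" where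
  "is_hom m C n D \<phi> \<longleftrightarrow> (\<forall>u<m. \<phi> u < n) \<and> (\<forall>u v. C u v \<longrightarrow> D (\<phi> u) (\<phi> v))"

definition hom_arc :: "(nat \<Rightarrow> nat \<Rightarrow> bool) \<Rightarrow> (nat \<Rightarrow> nat \<Rightarrow> bool) \<Rightarrow> (nat \<Rightarrow> nat) \<Rightarrow> (nat \<Rightarrow> nat) \<Rightarrow> bool" where
  "hom_arc C D \<phi> \<psi> \<longleftrightarrow> (\<forall>u v. C u v \<longrightarrow> D (\<phi> u) (\<psi> v))"

definition up_edge :: "nat \<Rightarrow> (nat \<Rightarrow> nat \<Rightarrow> bool) \<Rightarrow> nat \<Rightarrow> (nat \<Rightarrow> nat \<Rightarrow> bool) \<Rightarrow> (nat \<Rightarrow> nat) \<Rightarrow> (nat \<Rightarrow> nat) \<Rightarrow> bool" where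
  "up_edge m C n D \<phi> \<psi> \<longleftrightarrow>
     is_hom m C n D \<phi> \<and> is_hom m C n D \<psi> \<and>
     (hom_arc C D \<phi> \<psi> \<or> hom_arc C D \<psi> \<phi>) \<and>
     (\<forall>c<m. \<psi> c = \<phi> c \<or> \<psi> c = Suc (\<phi> c) mod n)"

definition up_path :: "nat \<Rightarrow> (nat \<Rightarrow> nat \<Rightarrow> bool) \<Rightarrow> nat \<Rightarrow> (nat \<Rightarrow> nat \<Rightarrow> bool) \<Rightarrow> (nat \<Rightarrow> nat) \<Rightarrow> (nat \<Rightarrow> nat) \<Rightarrow> bool" where
  "up_path m C n D \<phi> \<phi>' \<longleftrightarrow>
     (\<exists>ps. ps \<noteq> [] \<and> hd ps = \<phi> \<and> last ps = \<phi>' \<and>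
           (\<forall>j. Suc j < length ps \<longrightarrow> up_edge m C n D (ps ! j) (ps ! Suc j)))"

definition edge_inc :: "nat \<Rightarrow> nat \<Rightarrow> (nat \<Rightarrow> nat) \<Rightarrow> nat \<Rightarrow> int" where
  "edge_inc m n \<phi> i =
     (if \<phi> (Suc i mod m) = Suc (\<phi> i) mod n then 1
      else if \<phi> i = Suc (\<phi> (Suc i mod m)) mod n then -1 else 0)"

definition increase :: "nat \<Rightarrow> nat \<Rightarrow> (nat \<Rightarrow> nat) \<Rightarrow> nat \<Rightarrow> nat \<Rightarrow> int" where
  "increase m n \<phi> a l = (\<Sum>j<l. edge_inc m n \<phi> ((a + j) mod m))"

text \<open>The subpath c_a ... c_b with b = a + l (mod m), 0 < l < m, is a cutback.\<close>
definition cutback :: "nat \<Rightarrow> nat \<Rightarrow> (nat \<Rightarrow> nat) \<Rightarrow> nat \<Rightarrow> nat \<Rightarrow> bool" where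
  "cutback m n \<phi> a l \<longleftrightarrow>
     a < m \<and> 0 < l \<and> l < m \<and> increase m n \<phi> a l = 0 \<and>
     (\<forall>j. 0 < j \<and> j < l \<longrightarrow> increase m n \<phi> a j < 0)"

definition flatten :: "nat \<Rightarrow> (nat \<Rightarrow> nat) \<Rightarrow> nat \<Rightarrow> nat \<Rightarrow> (nat \<Rightarrow> nat)" where
  "flatten m \<phi> a l = (\<lambda>c. if (\<exists>j\<le>l. c = (a + j) mod m) then \<phi> a else \<phi> c)"

end

theory Submission
  imports Defs
begin

lemma up_path_refl: "up_path m C n D x x"
  unfolding up_path_def by (rule exI[of _ "[x]"]) simp

lemma up_path_cons: "up_edge m C n D x y \<Longrightarrow> up_path m C n D y z \<Longrightarrow> up_path m C n D x z"
  unfolding up_path_def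
proof -
  assume e: "up_edge m C n D x y" and "\<exists>ps. ps \<noteq> [] \<and> hd ps = y \<and> last ps = z \<and>
           (\<forall>j. Suc j < length ps \<longrightarrow> up_edge m C n D (ps ! j) (ps ! Suc j))"
  then obtain ps where ps: "ps \<noteq> []" "hd ps = y" "last ps = z"
    "\<forall>j. Suc j < length ps \<longrightarrow> up_edge m C n D (ps ! j) (ps ! Suc j)" by blast
  have "\<forall>j. Suc j < length (x # ps) \<longrightarrow> up_edge m C n D ((x # ps) ! j) ((x # ps) ! Suc j)"
  proof (intro allI impI)
    fix j assume j: "Suc j < length (x # ps)"
    show "up_edge m C n D ((x # ps) ! j) ((x # ps) ! Suc j)"
    proof (cases j)
      case 0 then show ?thesis using e ps(1,2) by (simp add: hd_conv_nth)
    next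
      case (Suc i) then show ?thesis using ps(4) j by simp
    qed
  qed
  then show "\<exists>ps. ps \<noteq> [] \<and> hd ps = x \<and> last ps = z \<and>
           (\<forall>j. Suc j < length ps \<longrightarrow> up_edge m C n D (ps ! j) (ps ! Suc j))"
    using ps by (intro exI[of _ "x # ps"]) simp
qed

locale S =
  fixes m n :: nat and C D :: "nat \<Rightarrow> nat \<Rightarrow> bool" and \<phi> :: "nat \<Rightarrow> nat" and a l :: nat
  assumes Cc: "refl_dicycle m C" and Dc: "refl_dicycle n D"
    and hom: "is_hom m C n D \<phi>" and cb: "cutback m n \<phi> a l"
begin

definition pos where "pos c = (c + (m - a)) mod m"
definition h where "h j = increase m n \<phi> a j"
definition val :: "int \<Rightarrow> nat" where "val t = nat ((int (\<phi> a) + t) mod int n)"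
definition psi :: "int \<Rightarrow> nat \<Rightarrow> nat" where
  "psi k c = (if c < m \<and> pos c \<le> l then val (max (h (pos c)) k) else \<phi> c)"

lemma m3: "m \<ge> 3" using Cc by (simp add: refl_dicycle_def)
lemma n3: "n \<ge> 3" using Dc by (simp add: refl_dicycle_def)
lemma al: "a < m" "0 < l" "l < m" "h l = 0" "\<And>j. 0 < j \<Longrightarrow> j < l \<Longrightarrow> h j < 0"
  using cb by (auto simp: cutback_def h_def)
lemma h0: "h 0 = 0" by (simp add: h_def increase_def)
lemma phin: "u < m \<Longrightarrow> \<phi> u < n" using hom by (simp add: is_hom_def)
lemma phia: "\<phi> a < n" using phin al(1) by simp

lemma P1: "c < m \<Longrightarrow> (a + pos c) mod m = c"
proof -
  assume c: "c < m"
  have "(a + pos c) mod m = (a + (c + (m - a))) mod m" unfolding pos_def by (simp add: mod_add_right_eq)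
  also have "a + (c + (m - a)) = c + m" using al(1) by simp
  finally show ?thesis using c by simp
qed

lemma P2: "i < m \<Longrightarrow> pos ((a + i) mod m) = i"
proof -
  assume i: "i < m"
  have "pos ((a + i) mod m) = ((a + i) + (m - a)) mod m" unfolding pos_def by (simp add: mod_add_left_eq)
  also have "(a + i) + (m - a) = i + m" using al(1) by simp
  finally show ?thesis using i by simp
qed

lemma pos_lt: "pos c < m" using m3 by (simp add: pos_def)

lemma pos_Suc: "v < m \<Longrightarrow> pos (Suc v mod m) = Suc (pos v) mod m"
  unfolding pos_def by (simp add: mod_add_left_eq mod_Suc_eq)

lemma hSuc: "h (Suc j) = h j + edge_inc m n \<phi> ((a + j) mod m)"
  by (simp add: h_def increase_def)

lemma einc: "edge_inc m n \<phi> i \<in> {-1, 0, 1}" by (simp add: edge_inc_def)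

lemma hstep: "\<bar>h (Suc j) - h j\<bar> \<le> 1" using einc[of "(a+j) mod m"] hSuc[of j] by auto

lemma hlow: "h j \<ge> - int j"
proof (induction j)
  case 0 then show ?case by (simp add: h0)
next
  case (Suc j) then show ?case using hstep[of j] by (simp add: abs_le_iff)
qed

lemma hle0: "j \<le> l \<Longrightarrow> h j \<le> 0"
proof -
  assume j: "j \<le> l"
  show ?thesis
  proof (cases "j = 0 \<or> j = l")
    case True then show ?thesis using al(4) h0 by auto
  next
    case False then show ?thesis using al(5)[of j] j by simp
  qed
qed

lemma val_lt: "val t < n" using n3 by (simp add: val_def nat_less_iff)

lemma val_Suc: "val (t + 1) = Suc (val t) mod n"
proof -
  have "int (Suc (val t) mod n) = (int (Suc (val t))) mod int n" by (simp add: zmod_int)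
  also have "\<dots> = ((int (\<phi> a) + t) mod int n + 1) mod int n" using n3 by (simp add: val_def add.commute)
  also have "\<dots> = (int (\<phi> a) + (t + 1)) mod int n" by (metis mod_add_left_eq add.assoc)
  finally show ?thesis unfolding val_def by (metis nat_int)
qed

lemma Suc_mod': "x < (k::nat) \<Longrightarrow> Suc x mod k = (if Suc x = k then 0 else Suc x)"
  by (simp add: mod_Suc)

lemma Suc_mod_inj: "x < (k::nat) \<Longrightarrow> y < k \<Longrightarrow> Suc x mod k = Suc y mod k \<Longrightarrow> x = y"
  by (simp add: Suc_mod' split: if_splits)

lemma D_adj: "p < n \<Longrightarrow> q < n \<Longrightarrow> D p q \<or> D q p \<Longrightarrow> q = p \<or> q = Suc p mod n \<or> p = Suc q mod n"
  using Dc unfolding refl_dicycle_def by metis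

lemma C_adj: "C u v \<Longrightarrow> u < m \<and> v < m \<and> (u = v \<or> v = Suc u mod m \<or> u = Suc v mod m)"
  using Cc unfolding refl_dicycle_def by metis

lemma C_edge: "i < m \<Longrightarrow> C i (Suc i mod m) \<or> C (Suc i mod m) i"
  using Cc unfolding refl_dicycle_def by metis

lemma D_refl: "p < n \<Longrightarrow> D p p" using Dc unfolding refl_dicycle_def by metis
lemma D_edge: "p < n \<Longrightarrow> D p (Suc p mod n) \<or> D (Suc p mod n) p" using Dc unfolding refl_dicycle_def by metis
lemma homD: "C u v \<Longrightarrow> D (\<phi> u) (\<phi> v)" using hom by (simp add: is_hom_def)

lemma val0: "val 0 = \<phi> a" using phia by (simp add: val_def)

lemma H3: "\<phi> ((a + j) mod m) = val (h j)"
proof (induction j)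
  case 0 then show ?case using al(1) by (simp add: h0 val0)
next
  case (Suc j)
  define i where "i = (a + j) mod m"
  have i: "i < m" using m3 by (simp add: i_def)
  have si: "Suc i mod m = (a + Suc j) mod m" by (simp add: i_def mod_Suc_eq)
  define p where "p = \<phi> i"
  define q where "q = \<phi> (Suc i mod m)"
  have pv: "p = val (h j)" using Suc by (simp add: p_def i_def)
  have pn: "p < n" "q < n" using phin i m3 by (auto simp: p_def q_def)
  have "D p q \<or> D q p" using C_edge[OF i] homD unfolding p_def q_def by blast
  then have cases: "q = p \<or> q = Suc p mod n \<or> p = Suc q mod n" using D_adj pn by blast
  have hs: "h (Suc j) = h j + edge_inc m n \<phi> i" by (simp add: hSuc i_def)
  have n0: "p \<noteq> Suc p mod n" "q \<noteq> Suc q mod n" using n3 pn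
    by (simp_all add: Suc_mod')
  show ?case
  proof -
    consider "q = Suc p mod n" | "q \<noteq> Suc p mod n" "p = Suc q mod n" | "q = p" "q \<noteq> Suc p mod n" "p \<noteq> Suc q mod n"
      using cases by blast
    then show ?thesis
    proof cases
      case 1
      then have "edge_inc m n \<phi> i = 1" by (simp add: edge_inc_def p_def q_def)
      then show ?thesis using hs 1 pv val_Suc si q_def by simp
    next
      case 2
      then have "edge_inc m n \<phi> i = -1" by (simp add: edge_inc_def p_def q_def)
      then have hh: "h (Suc j) = h j - 1" using hs by simp
      have "Suc (val (h j - 1)) mod n = p" using pv val_Suc[of "h j - 1"] by simp
      then have "val (h j - 1) = q" using 2 Suc_mod_inj[of "val (h j - 1)" n q] val_lt pn by simp
      then show ?thesis using hh si q_def by simp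
    next
      case 3
      then have "edge_inc m n \<phi> i = 0" by (simp add: edge_inc_def p_def q_def)
      then show ?thesis using hs 3 pv si q_def by simp
    qed
  qed
qed

lemma phi_path: "c < m \<Longrightarrow> \<phi> c = val (h (pos c))"
  using H3[of "pos c"] P1 by simp

lemma adjpos:
  assumes u: "u < m" and v: "v < m" and adj: "v = Suc u mod m \<or> u = Suc v mod m"
    and i: "0 < pos u" "pos u < l"
  shows "pos v \<le> l \<and> (pos v = Suc (pos u) \<or> Suc (pos v) = pos u)"
  using adj
proof
  assume "v = Suc u mod m"
  then have "pos v = Suc (pos u) mod m" using pos_Suc u by simp
  then show ?thesis using i al(3) by simp
next
  assume e: "u = Suc v mod m"
  then have "pos u = Suc (pos v) mod m" using pos_Suc v by simp
  then show ?thesis using i pos_lt[of v] by (simp add: Suc_mod' split: if_splits)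
qed

definition interior where "interior c \<longleftrightarrow> c < m \<and> 0 < pos c \<and> pos c < l"

lemma pair:
  assumes "u < m" "v < m" "v = Suc u mod m \<or> u = Suc v mod m" "interior u \<or> interior v"
  shows "pos u \<le> l \<and> pos v \<le> l \<and> \<bar>h (pos u) - h (pos v)\<bar> \<le> 1"
  using assms adjpos[of u v] adjpos[of v u] hstep[of "pos u"] hstep[of "pos v"]
  unfolding interior_def by (auto simp: abs_minus_commute)

lemma psi_nonint: "k \<le> 0 \<Longrightarrow> \<not> interior c \<Longrightarrow> psi k c = \<phi> c"
proof -
  assume k: "k \<le> 0" and ni: "\<not> interior c"
  show ?thesis
  proof (cases "c < m \<and> pos c \<le> l")
    case True
    then have "pos c = 0 \<or> pos c = l" using ni unfolding interior_def by auto
    then have "h (pos c) = 0" using h0 al(4) by auto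
    then show ?thesis using True k phi_path[of c] by (simp add: psi_def)
  next
    case False then show ?thesis unfolding psi_def by (metis (no_types, lifting))
  qed
qed

lemma maxlem: "\<bar>x - y\<bar> \<le> (1::int) \<Longrightarrow> max x k = max y k \<or> (max x k = x \<and> max y k = y)"
  by auto

lemma psi_lt: "u < m \<Longrightarrow> psi k u < n"
  using val_lt phin by (simp add: psi_def)

lemma psi_hom: "k \<le> 0 \<Longrightarrow> is_hom m C n D (psi k)"
  unfolding is_hom_def
proof (intro conjI allI impI)
  fix u assume "u < m" then show "psi k u < n" by (rule psi_lt)
next
  fix u v assume k: "k \<le> 0" and cuv: "C u v"
  from C_adj[OF cuv] have u: "u < m" and v: "v < m" and adj: "u = v \<or> v = Suc u mod m \<or> u = Suc v mod m" by auto
  have Dphi: "D (\<phi> u) (\<phi> v)" using homD[OF cuv] .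
  show "D (psi k u) (psi k v)"
  proof (cases "u = v")
    case True then show ?thesis using D_refl psi_lt u by simp
  next
    case False
    show ?thesis
    proof (cases "interior u \<or> interior v")
      case True
      with pair[of u v] adj False u v have pr: "pos u \<le> l" "pos v \<le> l" "\<bar>h (pos u) - h (pos v)\<bar> \<le> 1" by auto
      have ps: "psi k u = val (max (h (pos u)) k)" "psi k v = val (max (h (pos v)) k)"
        using pr u v by (auto simp: psi_def)
      from maxlem[OF pr(3), of k] show ?thesis
      proof
        assume "max (h (pos u)) k = max (h (pos v)) k"
        then show ?thesis using ps D_refl val_lt by simp
      next
        assume "max (h (pos u)) k = h (pos u) \<and> max (h (pos v)) k = h (pos v)"
        then show ?thesis using ps Dphi phi_path u v by simp
      qed
    next
      case False
      then show ?thesis using psi_nonint k Dphi by simp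
    qed
  qed
qed

definition mv where "mv k c \<longleftrightarrow> c < m \<and> pos c \<le> l \<and> h (pos c) \<le> k"

lemma mv_int: "k < 0 \<Longrightarrow> mv k c \<Longrightarrow> interior c"
  unfolding mv_def interior_def using h0 al(4) by (metis le_neq_implies_less not_gr0 not_less)

lemma psi_mv: "mv k c \<Longrightarrow> psi k c = val k \<and> psi (k+1) c = val (k+1)"
  unfolding mv_def psi_def by auto

lemma psi_nmv: "\<not> mv k c \<Longrightarrow> psi (k+1) c = psi k c"
  unfolding mv_def psi_def by auto

lemma mv_nb:
  assumes k: "k < 0" and mu: "mv k u" and cuv: "C u v \<or> C v u" and nv: "\<not> mv k v"
  shows "psi k v = val (k+1)"
proof -
  have u: "u < m" and v: "v < m" and adj: "u = v \<or> v = Suc u mod m \<or> u = Suc v mod m"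
    using cuv C_adj by blast+
  have "u \<noteq> v" using mu nv by auto
  with pair[of u v] adj u v mv_int[OF k mu]
  have pr: "pos u \<le> l" "pos v \<le> l" "\<bar>h (pos u) - h (pos v)\<bar> \<le> 1" by auto
  have "h (pos u) \<le> k" using mu by (simp add: mv_def)
  moreover have "h (pos v) > k" using nv pr v by (simp add: mv_def)
  ultimately have "h (pos v) = k + 1" using pr(3) by auto
  then show ?thesis using pr v by (simp add: psi_def)
qed

lemma psi_start: "psi (- int l) = \<phi>"
proof
  fix c show "psi (- int l) c = \<phi> c"
  proof (cases "c < m \<and> pos c \<le> l")
    case True
    then have "max (h (pos c)) (- int l) = h (pos c)" using hlow[of "pos c"] by auto
    then show ?thesis using True phi_path[of c] by (simp add: psi_def)
  next
    case False then show ?thesis unfolding psi_def by (metis (no_types, lifting))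
  qed
qed

lemma psi_end: "psi 0 = flatten m \<phi> a l"
proof
  fix c show "psi 0 c = flatten m \<phi> a l c"
  proof (cases "c < m \<and> pos c \<le> l")
    case True
    then have "max (h (pos c)) 0 = 0" using hle0[of "pos c"] by auto
    moreover have "\<exists>j\<le>l. c = (a + j) mod m" using True P1[of c] by metis
    ultimately show ?thesis using True by (simp add: psi_def flatten_def val0)
  next
    case False
    have "\<not> (\<exists>j\<le>l. c = (a + j) mod m)"
    proof
      assume "\<exists>j\<le>l. c = (a + j) mod m"
      then obtain j where j: "j \<le> l" "c = (a + j) mod m" by blast
      then have "c < m" "pos c = j" using P2[of j] al(3) m3 by auto
      then show False using False j by simp
    qed
    then show ?thesis using False unfolding psi_def flatten_def by (metis (no_types, lifting))
  qed
qed

lemma upe: "k < 0 \<Longrightarrow> up_edge m C n D (psi k) (psi (k+1))"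
  unfolding up_edge_def
proof (intro conjI)
  assume k: "k < 0"
  show "is_hom m C n D (psi k)" "is_hom m C n D (psi (k+1))" using psi_hom k by auto
  show "\<forall>c<m. psi (k + 1) c = psi k c \<or> psi (k + 1) c = Suc (psi k c) mod n"
    using psi_mv psi_nmv val_Suc by metis
  have vs: "Suc (val k) mod n = val (k+1)" using val_Suc by simp
  have hk: "\<And>u v. C u v \<Longrightarrow> D (psi k u) (psi k v)" using psi_hom[of k] k by (simp add: is_hom_def)
  from D_edge[OF val_lt[of k]] vs
  have "D (val k) (val (k+1)) \<or> D (val (k+1)) (val k)" by simp
  then show "hom_arc C D (psi k) (psi (k + 1)) \<or> hom_arc C D (psi (k + 1)) (psi k)"
  proof
    assume dd: "D (val k) (val (k+1))"
    have "hom_arc C D (psi k) (psi (k + 1))"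
      unfolding hom_arc_def
    proof (intro allI impI)
      fix u v assume cuv: "C u v"
      show "D (psi k u) (psi (k + 1) v)"
        using psi_mv[of k u] psi_mv[of k v] psi_nmv[of k u] psi_nmv[of k v] mv_nb[OF k, of u v] mv_nb[OF k, of v u]
          cuv dd hk[OF cuv] D_refl[OF val_lt[of "k+1"]]
        by (cases "mv k u"; cases "mv k v") auto
    qed
    then show ?thesis ..
  next
    assume dd: "D (val (k+1)) (val k)"
    have "hom_arc C D (psi (k + 1)) (psi k)"
      unfolding hom_arc_def
    proof (intro allI impI)
      fix u v assume cuv: "C u v"
      show "D (psi (k + 1) u) (psi k v)"
        using psi_mv[of k u] psi_mv[of k v] psi_nmv[of k u] psi_nmv[of k v] mv_nb[OF k, of u v] mv_nb[OF k, of v u]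
          cuv dd hk[OF cuv] D_refl[OF val_lt[of "k+1"]]
        by (cases "mv k u"; cases "mv k v") auto
    qed
    then show ?thesis ..
  qed
qed

lemma chain: "up_path m C n D (psi (- int d)) (psi 0)"
proof (induction d)
  case 0 then show ?case using up_path_refl by simp
next
  case (Suc d)
  have "up_edge m C n D (psi (- int (Suc d))) (psi (- int (Suc d) + 1))" by (rule upe) simp
  then show ?case using Suc up_path_cons by simp
qed

lemma final: "up_path m C n D \<phi> (flatten m \<phi> a l)"
  using chain[of l] psi_start psi_end by simp

end

theorem lemma2p2:
  fixes m n :: nat and C D :: "nat \<Rightarrow> nat \<Rightarrow> bool" and \<phi> :: "nat \<Rightarrow> nat" and a l :: nat
  assumes "refl_dicycle m C" and "refl_dicycle n D" and "non_contractible n D"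
    and "is_hom m C n D \<phi>" and "cutback m n \<phi> a l"
  shows "up_path m C n D \<phi> (flatten m \<phi> a l)"
proof -
  interpret S m n C D \<phi> a l using assms by (unfold_locales) auto
  show ?thesis by (rule final)
qed

end
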